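(* Let $k$ be fixed and let $(P_n)_{n\in\mathbb N}$ be a sequence of orthogonal projections $P_n\in M_k\otimes M_n$ satisfying condition $\mathcal C_1$ with limiting function $f$. Then for any sequence of vectors $x_n\in\mathbb C^k\otimes\mathbb C^n$ with $x_nx_n^*\le P_n$, setting $X_n=\mathrm{Tr}_{\mathbb C^n}[x_nx_n^*]$, we have $$\limsup_{n\to\infty}\mathrm{Tr}[X_nA]\le f(A)\qquad\text{for all }A\in D_k.$$
   Context: $D_k=\{A\in M_k(\mathbb C): A\ge0,\ \mathrm{Tr}A=1\}$. A sequence of orthogonal projections $P_n\in M_k\otimes M_n$ satisfies condition $\mathcal C_m$ if for every $A\in D_k$ the $m$ largest eigenvalues $\lambda_1(P_n(A\otimes I_n)P_n)\ge\dots\ge\lambda_m(P_n(A\otimes I_n)P_n)$ converge as $n\to\infty$ to a common limit $f(A)$. $\mathrm{Tr}_{\mathbb C^n}$ denotes the partial trace over the second factor. *)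

theory Defs
  imports "HOL-Library.Extended_Real" "Jordan_Normal_Form.Schur_Decomposition"
begin

(* Matrices are Jordan_Normal_Form complex matrices. C^k (x) C^n is identified with
   C^(k*n) via e_a (x) e_b |-> e_(a*n+b)  (a < k, b < n). *)

definition kron :: "complex mat \<Rightarrow> complex mat \<Rightarrow> complex mat" where
  "kron A B = mat (dim_row A * dim_row B) (dim_col A * dim_col B)
     (\<lambda>(i,j). A $$ (i div dim_row B, j div dim_col B) * B $$ (i mod dim_row B, j mod dim_col B))"

definition ptrace2 :: "nat \<Rightarrow> nat \<Rightarrow> complex mat \<Rightarrow> complex mat" where
  "ptrace2 k n M = mat k k (\<lambda>(a,c). \<Sum>b<n. M $$ (a*n+b, c*n+b))"

definition hermitian :: "complex mat \<Rightarrow> bool" where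
  "hermitian M \<longleftrightarrow> mat_adjoint M = M"

definition psd :: "nat \<Rightarrow> complex mat \<Rightarrow> bool" where
  "psd d M \<longleftrightarrow> M \<in> carrier_mat d d \<and> hermitian M \<and>
     (\<forall>v \<in> carrier_vec d. 0 \<le> Re ((M *\<^sub>v v) \<bullet>c v))"

definition mtrace :: "complex mat \<Rightarrow> complex" where
  "mtrace M = (\<Sum>i<dim_row M. M $$ (i,i))"

definition density :: "nat \<Rightarrow> complex mat set" where
  "density k = {A. psd k A \<and> mtrace A = 1}"

definition orth_proj :: "nat \<Rightarrow> complex mat \<Rightarrow> bool" where
  "orth_proj d P \<longleftrightarrow> P \<in> carrier_mat d d \<and> P * P = P \<and> hermitian P"

definition outer :: "complex vec \<Rightarrow> complex mat" where
  "outer x = mat (dim_vec x) (dim_vec x) (\<lambda>(i,j). x $ i * cnj (x $ j))"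

definition loewner_le :: "nat \<Rightarrow> complex mat \<Rightarrow> complex mat \<Rightarrow> bool" where
  "loewner_le d A B \<longleftrightarrow> A \<in> carrier_mat d d \<and> B \<in> carrier_mat d d \<and> psd d (B - A)"

(* largest eigenvalue lambda_1 of a (Hermitian, hence real-spectrum) matrix *)
definition lambda_max :: "complex mat \<Rightarrow> real" where
  "lambda_max M = Max (Re ` {ev. eigenvalue M ev})"

definition cond_C1 :: "nat \<Rightarrow> (nat \<Rightarrow> complex mat) \<Rightarrow> (complex mat \<Rightarrow> real) \<Rightarrow> bool" where
  "cond_C1 k P f \<longleftrightarrow> (\<forall>A \<in> density k.
     (\<lambda>n. lambda_max (P n * kron A (1\<^sub>m n) * P n)) \<longlonglongrightarrow> f A)"

end

theory Submission imports Defs "Jordan_Normal_Form.Spectral_Radius" "HOL-Analysis.Function_Topology" "HOL-Analysis.Topology_Euclidean_Space" begin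

hide_type (open) Finite_Cartesian_Product.vec
unbundle no vec_syntax

definition QF :: "nat \<Rightarrow> (nat \<Rightarrow> nat \<Rightarrow> complex) \<Rightarrow> (nat \<Rightarrow> complex) \<Rightarrow> real" where
  "QF d m y = Re (\<Sum>i<d. \<Sum>j<d. m i j * y j * cnj (y i))"
definition NF :: "nat \<Rightarrow> (nat \<Rightarrow> complex) \<Rightarrow> real" where
  "NF d y = (\<Sum>i<d. (cmod (y i))^2)"

lemma coord_cont[continuous_intros]: "continuous_on S (f::_\<Rightarrow>_\<Rightarrow>_::topological_space) \<Longrightarrow> continuous_on S (\<lambda>x. f x i)"
  by (rule continuous_on_product_then_coordinatewise)

lemma QF_cont: "continuous_on S (QF d m)"
  unfolding QF_def  by (intro continuous_intros)

lemma NF_cont: "continuous_on S (NF d)"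
  unfolding NF_def by (intro continuous_intros)
lemma max_exists:
  assumes "d > 0"
  shows "\<exists>u. (\<forall>i\<ge>d. u i = 0) \<and> NF d u = 1 \<and>
     (\<forall>y. (\<forall>i\<ge>d. y i = 0) \<and> NF d y = 1 \<longrightarrow> QF d m y \<le> QF d m u)"
proof -
  define S where "S = {y::nat\<Rightarrow>complex. (\<forall>i\<ge>d. y i = 0) \<and> NF d y = 1}"
  define K where "K = PiE UNIV (\<lambda>i::nat. if i < d then cball (0::complex) 1 else {0})"
  have cK: "compact K"
  proof -
    have "compactin (product_topology (\<lambda>i. euclidean) UNIV) K"
      unfolding K_def compactin_PiE by auto
    then show ?thesis by (simp add: euclidean_product_topology)
  qed
  have cl: "closed S"
  proof -
    have "S = (\<Inter>i\<in>{d..}. {y. y i = 0}) \<inter> {y. NF d y = 1}"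
      unfolding S_def by auto
    moreover have "closed (\<Inter>i\<in>{d..}. {y::nat\<Rightarrow>complex. y i = 0})"
      by (intro closed_INT ballI closed_Collect_eq continuous_intros)
    moreover have "closed {y. NF d y = 1}"
      by (intro closed_Collect_eq NF_cont continuous_intros)
    ultimately show ?thesis by auto
  qed
  have sub: "S \<subseteq> K"
  proof
    fix y assume y: "y \<in> S"
    have "cmod (y i) \<le> 1" if "i < d" for i
    proof -
      have "(cmod (y i))^2 \<le> NF d y" unfolding NF_def
        using that by (intro member_le_sum) auto
      then have "(cmod (y i))^2 \<le> 1" using y S_def by auto
      then show ?thesis by (simp add: power_le_one_iff abs_le_square_iff)
    qed
    then show "y \<in> K" using y unfolding K_def S_def by (auto simp: PiE_def)
  qed
  have cS: "compact S" using compact_Int_closed[OF cK cl] sub by (simp add: Int_absorb1)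
  have ne: "S \<noteq> {}"
  proof -
    have "NF d (\<lambda>i. if i = 0 then 1 else 0) = (\<Sum>i<d. if i = 0 then 1 else 0)"
      unfolding NF_def by (intro sum.cong) auto
    also have "\<dots> = 1" using assms by simp
    finally have "(\<lambda>i. if i = 0 then 1 else 0) \<in> S" unfolding S_def using assms by auto
    then show ?thesis by auto
  qed
  from continuous_attains_sup[OF cS ne QF_cont] obtain u where "u \<in> S" "\<forall>y\<in>S. QF d m y \<le> QF d m u"
    by blast
  then show ?thesis unfolding S_def by auto
qed

lemma QF_scale: "QF d m (\<lambda>i. complex_of_real c * y i) = c^2 * QF d m y"
proof -
  have "(\<Sum>i<d. \<Sum>j<d. m i j * (complex_of_real c * y j) * cnj (complex_of_real c * y i))
     = complex_of_real (c^2) * (\<Sum>i<d. \<Sum>j<d. m i j * y j * cnj (y i))"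
    by (simp add: sum_distrib_left algebra_simps power2_eq_square)
  then show ?thesis unfolding QF_def by simp
qed

lemma NF_scale: "NF d (\<lambda>i. complex_of_real c * y i) = c^2 * NF d y"
  unfolding NF_def by (simp add: sum_distrib_left norm_mult power_mult_distrib)

lemma NF_nonneg: "NF d y \<ge> 0" unfolding NF_def by (simp add: sum_nonneg)

lemma NF_zero: "NF d y = 0 \<Longrightarrow> i < d \<Longrightarrow> y i = 0"
  unfolding NF_def by (subst (asm) sum_nonneg_eq_0_iff) auto

lemma QF_cong: "(\<And>i. i < d \<Longrightarrow> y i = y' i) \<Longrightarrow> QF d m y = QF d m y'"
  unfolding QF_def by (intro arg_cong[where f=Re] sum.cong refl) auto
lemma NF_cong: "(\<And>i. i < d \<Longrightarrow> y i = y' i) \<Longrightarrow> NF d y = NF d y'"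
  unfolding NF_def by (intro sum.cong refl) auto

lemma NF_as: "complex_of_real (NF d y) = (\<Sum>i<d. y i * cnj (y i))"
  unfolding NF_def by (simp add: complex_mult_cnj cmod_power2 of_real_sum)

lemma cross_swap:
  assumes herm: "\<And>i j. i<d \<Longrightarrow> j<d \<Longrightarrow> m j i = cnj (m i j)"
  shows "(\<Sum>i<d. \<Sum>j<d. m i j * z j * cnj (u i)) = cnj (\<Sum>i<d. \<Sum>j<d. m i j * u j * cnj (z i))"
proof -
  have h': "cnj (m i j) = m j i" if "i<d" "j<d" for i j using herm[OF that] by simp
  have "cnj (\<Sum>i<d. \<Sum>j<d. m i j * u j * cnj (z i)) = (\<Sum>i<d. \<Sum>j<d. cnj (m i j) * cnj (u j) * z i)"
    by (simp add: cnj_sum)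
  also have "\<dots> = (\<Sum>i<d. \<Sum>j<d. m j i * cnj (u j) * z i)"
    by (intro sum.cong refl) (simp add: h')
  also have "\<dots> = (\<Sum>j<d. \<Sum>i<d. m j i * cnj (u j) * z i)" by (rule sum.swap)
  also have "\<dots> = (\<Sum>i<d. \<Sum>j<d. m i j * z j * cnj (u i))" by (simp add: algebra_simps)
  finally show ?thesis by simp
qed

lemma QF_expand:
  assumes herm: "\<And>i j. i<d \<Longrightarrow> j<d \<Longrightarrow> m j i = cnj (m i j)"
  shows "QF d m (\<lambda>i. u i + complex_of_real t * z i) =
    QF d m u + 2 * t * Re (\<Sum>i<d. (\<Sum>j<d. m i j * u j) * cnj (z i)) + t^2 * QF d m z"
proof -
  define A where "A = (\<Sum>i<d. \<Sum>j<d. m i j * u j * cnj (u i))"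
  define B where "B = (\<Sum>i<d. \<Sum>j<d. m i j * z j * cnj (u i))"
  define C where "C = (\<Sum>i<d. \<Sum>j<d. m i j * u j * cnj (z i))"
  define D where "D = (\<Sum>i<d. \<Sum>j<d. m i j * z j * cnj (z i))"
  have ex: "(\<Sum>i<d. \<Sum>j<d. m i j * (u j + complex_of_real t * z j) * cnj (u i + complex_of_real t * z i))
     = A + complex_of_real t * B + complex_of_real t * C + complex_of_real (t^2) * D"
  proof -
    have pt: "m i j * (u j + complex_of_real t * z j) * cnj (u i + complex_of_real t * z i) =
      m i j * u j * cnj (u i) + complex_of_real t * (m i j * z j * cnj (u i))
      + complex_of_real t * (m i j * u j * cnj (z i)) + complex_of_real (t^2) * (m i j * z j * cnj (z i))" for i j
      by (simp add: algebra_simps power2_eq_square)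
    show ?thesis unfolding pt A_def B_def C_def D_def by (simp add: sum.distrib sum_distrib_left)
  qed
  have BC: "B = cnj C" unfolding B_def C_def by (rule cross_swap[OF herm])
  have C2: "C = (\<Sum>i<d. (\<Sum>j<d. m i j * u j) * cnj (z i))" unfolding C_def
    by (simp add: sum_distrib_right)
  have r: "Re (A + complex_of_real t * B + complex_of_real t * C + complex_of_real (t^2) * D)
     = Re A + 2 * t * Re C + t^2 * Re D" using BC by simp
  have q: "QF d m (\<lambda>i. u i + complex_of_real t * z i) = Re A + 2 * t * Re C + t^2 * Re D"
    unfolding QF_def ex r ..
  have qu: "QF d m u = Re A" unfolding QF_def A_def ..
  have qz: "QF d m z = Re D" unfolding QF_def D_def ..
  show ?thesis unfolding q qu qz C2 ..
qed

lemma NF_expand: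
  "NF d (\<lambda>i. u i + complex_of_real t * z i) =
    NF d u + 2 * t * Re (\<Sum>i<d. u i * cnj (z i)) + t^2 * NF d z"
proof -
  have "complex_of_real (NF d (\<lambda>i. u i + complex_of_real t * z i)) =
     (\<Sum>i<d. u i * cnj (u i)) + complex_of_real t * (\<Sum>i<d. z i * cnj (u i))
      + complex_of_real t * (\<Sum>i<d. u i * cnj (z i)) + complex_of_real (t^2) * (\<Sum>i<d. z i * cnj (z i))"
  proof -
    have pt: "(u i + complex_of_real t * z i) * cnj (u i + complex_of_real t * z i) =
      u i * cnj (u i) + complex_of_real t * (z i * cnj (u i))
      + complex_of_real t * (u i * cnj (z i)) + complex_of_real (t^2) * (z i * cnj (z i))" for i
      by (simp add: algebra_simps power2_eq_square)
    show ?thesis unfolding NF_as pt by (simp add: sum.distrib sum_distrib_left)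
  qed
  moreover have "(\<Sum>i<d. z i * cnj (u i)) = cnj (\<Sum>i<d. u i * cnj (z i))"
    by (simp add: cnj_sum mult.commute)
  ultimately have "complex_of_real (NF d (\<lambda>i. u i + complex_of_real t * z i)) =
     complex_of_real (NF d u) + complex_of_real t * cnj (\<Sum>i<d. u i * cnj (z i))
      + complex_of_real t * (\<Sum>i<d. u i * cnj (z i)) + complex_of_real (t^2) * complex_of_real (NF d z)"
    unfolding NF_as by simp
  then have "Re (complex_of_real (NF d (\<lambda>i. u i + complex_of_real t * z i))) = Re (complex_of_real (NF d u) + complex_of_real t * cnj (\<Sum>i<d. u i * cnj (z i))
      + complex_of_real t * (\<Sum>i<d. u i * cnj (z i)) + complex_of_real (t^2) * complex_of_real (NF d z))"
    by simp
  then show ?thesis by simp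
qed

lemma quad_zero:
  fixes N c :: real
  assumes N: "N \<ge> 0" and h: "\<And>t. 2 * t * N + t^2 * c \<le> 0"
  shows "N = 0"
proof (rule ccontr)
  assume "N \<noteq> 0" then have Np: "N > 0" using N by simp
  define t where "t = N / (\<bar>c\<bar> + 1)"
  have tp: "t > 0" unfolding t_def using Np by simp
  have "t * \<bar>c\<bar> \<le> N" unfolding t_def using Np
    by (simp add: field_simps)
  then have "\<bar>t * c\<bar> \<le> N" using tp by (simp add: abs_mult)
  then have "t * c \<ge> - N" by (simp add: abs_le_iff)
  then have "2 * N + t * c > 0" using Np by simp
  then have "t * (2 * N + t * c) > 0" using tp by simp
  then have "2 * t * N + t^2 * c > 0" by (simp add: algebra_simps power2_eq_square)
  then show False using h[of t] by simp
qed

lemma rayleigh: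
  assumes d: "d > 0" and herm: "\<And>i j. i<d \<Longrightarrow> j<d \<Longrightarrow> m j i = cnj (m i j)"
  shows "\<exists>u \<mu>. NF d u = 1 \<and> (\<forall>i<d. (\<Sum>j<d. m i j * u j) = complex_of_real \<mu> * u i)
      \<and> (\<forall>y. QF d m y \<le> \<mu> * NF d y) \<and> \<mu> = QF d m u"
proof -
  obtain u where uP: "(\<forall>i\<ge>d. u i = 0) \<and> NF d u = 1 \<and>
     (\<forall>y. (\<forall>i\<ge>d. y i = 0) \<and> NF d y = 1 \<longrightarrow> QF d m y \<le> QF d m u)"
    using max_exists[OF d, of m] by (rule exE)
  have u1: "NF d u = 1" using uP by (rule conjE) (rule conjunct1)
  have umax: "QF d m y \<le> QF d m u" if "\<forall>i\<ge>d. y i = 0" "NF d y = 1" for y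
    using uP that by simp
  define \<mu> where "\<mu> = QF d m u"
  have bound: "QF d m y \<le> \<mu> * NF d y" for y
  proof (cases "NF d y = 0")
    case True
    then have "QF d m y = QF d m (\<lambda>_. 0)" by (intro QF_cong) (simp add: NF_zero[OF True])
    then show ?thesis using True by (simp add: QF_def)
  next
    case False
    then have Np: "NF d y > 0" using NF_nonneg[of d y] by simp
    define c where "c = 1 / sqrt (NF d y)"
    define w where "w = (\<lambda>i. if i < d then complex_of_real c * y i else 0)"
    have c2: "c^2 * NF d y = 1" unfolding c_def using Np by (simp add: power_divide)
    have c2p: "c^2 > 0" unfolding c_def using Np by simp
    have "NF d w = c^2 * NF d y" unfolding w_def
      by (subst NF_cong[of d _ "\<lambda>i. complex_of_real c * y i"]) (auto simp: NF_scale)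
    moreover have "QF d m w = c^2 * QF d m y" unfolding w_def
      by (subst QF_cong[of d _ "\<lambda>i. complex_of_real c * y i"]) (auto simp: QF_scale)
    moreover have "\<forall>i\<ge>d. w i = 0" unfolding w_def by auto
    ultimately have "QF d m w \<le> QF d m u" using umax[of w] c2 by simp
    then have le: "c^2 * QF d m y \<le> \<mu>" using \<open>QF d m w = c^2 * QF d m y\<close> unfolding \<mu>_def by simp
    have "c^2 * (\<mu> * NF d y) = \<mu> * (c^2 * NF d y)" by (rule mult.left_commute)
    then have eq2: "\<mu> = c^2 * (\<mu> * NF d y)" using c2 by simp
    have "c^2 * QF d m y \<le> c^2 * (\<mu> * NF d y)" using le eq2 by linarith
    then show ?thesis using c2p by (simp add: mult_le_cancel_left_pos)
  qed
  define z where "z = (\<lambda>i. (\<Sum>j<d. m i j * u j) - complex_of_real \<mu> * u i)"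
  have zi: "z i = (\<Sum>j<d. m i j * u j) - complex_of_real \<mu> * u i" for i by (simp add: z_def)
  define R1 where "R1 = Re (\<Sum>i<d. (\<Sum>j<d. m i j * u j) * cnj (z i))"
  define R2 where "R2 = Re (\<Sum>i<d. u i * cnj (z i))"
  have e: "R1 - \<mu> * R2 = NF d z"
  proof -
    have "complex_of_real (NF d z) = (\<Sum>i<d. z i * cnj (z i))" by (simp add: NF_as)
    also have "\<dots> = (\<Sum>i<d. ((\<Sum>j<d. m i j * u j) - complex_of_real \<mu> * u i) * cnj (z i))"
      by (intro sum.cong refl) (simp only: zi)
    also have "\<dots> = (\<Sum>i<d. (\<Sum>j<d. m i j * u j) * cnj (z i)) - complex_of_real \<mu> * (\<Sum>i<d. u i * cnj (z i))"
      by (simp only: left_diff_distrib sum_subtractf sum_distrib_left mult.assoc)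
    finally have eqc: "complex_of_real (NF d z) = (\<Sum>i<d. (\<Sum>j<d. m i j * u j) * cnj (z i)) - complex_of_real \<mu> * (\<Sum>i<d. u i * cnj (z i))" .
    have "NF d z = Re ((\<Sum>i<d. (\<Sum>j<d. m i j * u j) * cnj (z i)) - complex_of_real \<mu> * (\<Sum>i<d. u i * cnj (z i)))"
      using arg_cong[OF eqc, of Re] by simp
    then show ?thesis unfolding R1_def R2_def by simp
  qed
  have "2 * t * NF d z + t^2 * (QF d m z - \<mu> * NF d z) \<le> 0" for t
  proof -
    have "QF d m (\<lambda>i. u i + complex_of_real t * z i) \<le> \<mu> * NF d (\<lambda>i. u i + complex_of_real t * z i)"
      by (rule bound)
    moreover have "QF d m (\<lambda>i. u i + complex_of_real t * z i) = \<mu> + 2 * t * R1 + t^2 * QF d m z"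
      using QF_expand[OF herm, where u=u and t=t and z=z] unfolding R1_def \<mu>_def by simp
    moreover have "NF d (\<lambda>i. u i + complex_of_real t * z i) = 1 + 2 * t * R2 + t^2 * NF d z"
      using NF_expand[where d=d and u=u and t=t and z=z] unfolding R2_def u1 by simp
    ultimately have h: "\<mu> + 2 * t * R1 + t^2 * QF d m z \<le> \<mu> * (1 + 2 * t * R2 + t^2 * NF d z)"
      by simp
    have a: "2 * t * NF d z = 2 * t * R1 - 2 * t * \<mu> * R2" unfolding e[symmetric] by (simp add: right_diff_distrib)
    have b: "\<mu> * (1 + 2 * t * R2 + t^2 * NF d z) = \<mu> + 2 * t * \<mu> * R2 + t^2 * (\<mu> * NF d z)"
      by (simp add: distrib_left)
    have c: "t^2 * (QF d m z - \<mu> * NF d z) = t^2 * QF d m z - t^2 * (\<mu> * NF d z)"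
      by (simp add: right_diff_distrib)
    show ?thesis using h a b c by linarith
  qed
  from quad_zero[OF NF_nonneg this] have "NF d z = 0" .
  then have "\<forall>i<d. z i = 0" using NF_zero by blast
  then have fin: "\<forall>i<d. (\<Sum>j<d. m i j * u j) = complex_of_real \<mu> * u i" unfolding z_def by simp
  show ?thesis
  proof (intro exI[of _ u] exI[of _ \<mu>] conjI)
    show "NF d u = 1" by (rule u1)
    show "\<forall>i<d. (\<Sum>j<d. m i j * u j) = complex_of_real \<mu> * u i" by (rule fin)
    show "\<forall>y. QF d m y \<le> \<mu> * NF d y" using bound by simp
    show "\<mu> = QF d m u" by (rule \<mu>_def)
  qed
qed

lemma sum_split_idx: "(\<Sum>i<(k::nat)*n. f i) = (\<Sum>c<k. \<Sum>b<n. f (c*n+b))"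
proof (induction k)
  case 0 show ?case by simp
next
  case (Suc k)
  have u: "{..<Suc k * n} = {..<k*n} \<union> {k*n..<k*n+n}" by auto
  have "(\<Sum>i<Suc k*n. f i) = (\<Sum>i<k*n. f i) + (\<Sum>i\<in>{k*n..<k*n+n}. f i)"
    unfolding u by (rule sum.union_disjoint) auto
  also have "(\<Sum>i\<in>{k*n..<k*n+n}. f i) = (\<Sum>b<n. f (k*n+b))"
    using sum.shift_bounds_nat_ivl[of f 0 "k*n" n] by (simp add: atLeast0LessThan add.commute)
  finally show ?case using Suc by simp
qed

lemma cip: fixes v w :: "complex vec" assumes "v \<in> carrier_vec d" "w \<in> carrier_vec d"
  shows "v \<bullet>c w = (\<Sum>i<d. v$i * cnj (w$i))"
  using assms by (simp add: scalar_prod_def lessThan_atLeast0)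

lemma mv_index: "(M::complex mat) \<in> carrier_mat d d \<Longrightarrow> v \<in> carrier_vec d \<Longrightarrow> i < d \<Longrightarrow>
    (M *\<^sub>v v)$i = (\<Sum>j<d. M$$(i,j) * v$j)"
  by (simp add: scalar_prod_def row_def lessThan_atLeast0)

lemma mvip: assumes M: "(M::complex mat) \<in> carrier_mat d d" and v: "v \<in> carrier_vec d" and w: "w \<in> carrier_vec d"
  shows "(M *\<^sub>v v) \<bullet>c w = (\<Sum>i<d. \<Sum>j<d. M$$(i,j) * v$j * cnj (w$i))"
proof -
  have "(M *\<^sub>v v) \<bullet>c w = (\<Sum>i<d. (M *\<^sub>v v)$i * cnj (w$i))" using M v w by (intro cip) auto
  also have "\<dots> = (\<Sum>i<d. (\<Sum>j<d. M$$(i,j) * v$j) * cnj (w$i))"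
    by (intro sum.cong refl) (simp add: mv_index[OF M v])
  also have "\<dots> = (\<Sum>i<d. \<Sum>j<d. M$$(i,j) * v$j * cnj (w$i))" by (simp add: sum_distrib_right)
  finally show ?thesis .
qed

lemma QF_vec: "(M::complex mat) \<in> carrier_mat d d \<Longrightarrow> v \<in> carrier_vec d \<Longrightarrow>
   QF d (\<lambda>i j. M$$(i,j)) (\<lambda>i. v$i) = Re ((M *\<^sub>v v) \<bullet>c v)"
  by (simp add: QF_def mvip)

lemma NF_vec: "v \<in> carrier_vec d \<Longrightarrow> complex_of_real (NF d (\<lambda>i. v$i)) = v \<bullet>c v"
  by (simp add: NF_as cip)

lemma herm_ent: assumes "hermitian M" "M \<in> carrier_mat d d" "i < d" "j < d"
  shows "cnj (M$$(i,j)) = M$$(j,i)"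
proof -
  have "mat_adjoint M $$ (j,i) = cnj (M $$ (i,j))" using assms(2-4)
    by (simp add: mat_adjoint_def mat_of_rows_def)
  then show ?thesis using assms(1) unfolding hermitian_def by simp
qed

lemma form_herm: assumes M: "(M::complex mat) \<in> carrier_mat d d"
  and h: "\<And>i j. i < d \<Longrightarrow> j < d \<Longrightarrow> cnj (M$$(i,j)) = M$$(j,i)"
  and v: "v \<in> carrier_vec d" and w: "w \<in> carrier_vec d"
  shows "(M *\<^sub>v v) \<bullet>c w = v \<bullet>c (M *\<^sub>v w)"
proof -
  have "v \<bullet>c (M *\<^sub>v w) = (\<Sum>j<d. v$j * cnj ((M *\<^sub>v w)$j))" using M v w by (intro cip) auto
  also have "\<dots> = (\<Sum>j<d. \<Sum>i<d. M$$(i,j) * v$j * cnj (w$i))"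
  proof (intro sum.cong refl)
    fix j assume j: "j \<in> {..<d}"
    have "cnj ((M *\<^sub>v w)$j) = (\<Sum>i<d. cnj (M$$(j,i)) * cnj (w$i))"
      using j by (simp add: mv_index[OF M w] cnj_sum)
    also have "\<dots> = (\<Sum>i<d. M$$(i,j) * cnj (w$i))"
      using j by (intro sum.cong refl) (simp add: h)
    finally show "v$j * cnj ((M *\<^sub>v w)$j) = (\<Sum>i<d. M$$(i,j) * v$j * cnj (w$i))"
      by (simp add: sum_distrib_left algebra_simps)
  qed
  also have "\<dots> = (\<Sum>i<d. \<Sum>j<d. M$$(i,j) * v$j * cnj (w$i))" by (rule sum.swap)
  finally show ?thesis using mvip[OF M v w] by simp
qed

lemma ip_unit_right: assumes v: "(v::complex vec) \<in> carrier_vec d" and j: "j < d"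
  shows "v \<bullet>c unit_vec d j = v$j"
proof -
  have "v \<bullet>c unit_vec d j = (\<Sum>i<d. v$i * cnj (unit_vec d j $ i))" using v by (intro cip) auto
  also have "\<dots> = (\<Sum>i<d. if i = j then v$i else 0)" using j by (intro sum.cong refl) auto
  also have "\<dots> = v$j" using j by simp
  finally show ?thesis .
qed

lemma ip_unit_left: assumes w: "(w::complex vec) \<in> carrier_vec d" and j: "j < d"
  shows "unit_vec d j \<bullet>c w = cnj (w$j)"
proof -
  have "unit_vec d j \<bullet>c w = (\<Sum>i<d. unit_vec d j $ i * cnj (w $ i))" using w by (intro cip) auto
  also have "\<dots> = (\<Sum>i<d. if i = j then cnj (w$i) else 0)" using j by (intro sum.cong refl) auto
  also have "\<dots> = cnj (w$j)" using j by simp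
  finally show ?thesis .
qed

lemma mv_unit: assumes M: "(M::complex mat) \<in> carrier_mat d d" and i: "i < d" and j: "j < d"
  shows "(M *\<^sub>v unit_vec d j) $ i = M$$(i,j)"
proof -
  have "(M *\<^sub>v unit_vec d j) $ i = (\<Sum>k<d. M$$(i,k) * unit_vec d j $ k)"
    using M i j by (intro mv_index) auto
  also have "\<dots> = (\<Sum>k<d. if k = j then M$$(i,k) else 0)" using j by (intro sum.cong refl) auto
  also have "\<dots> = M$$(i,j)" using j by simp
  finally show ?thesis .
qed

lemma ent_from_form: assumes M: "(M::complex mat) \<in> carrier_mat d d"
  and f: "\<And>v w. v \<in> carrier_vec d \<Longrightarrow> w \<in> carrier_vec d \<Longrightarrow> (M *\<^sub>v v) \<bullet>c w = v \<bullet>c (M *\<^sub>v w)"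
  and i: "i < d" and j: "j < d"
  shows "cnj (M$$(i,j)) = M$$(j,i)"
proof -
  have "(M *\<^sub>v unit_vec d i) \<bullet>c unit_vec d j = M$$(j,i)"
    using M i j by (simp add: ip_unit_right mv_unit)
  moreover have "unit_vec d i \<bullet>c (M *\<^sub>v unit_vec d j) = cnj (M$$(i,j))"
    using M i j by (simp add: ip_unit_left mv_unit)
  ultimately show ?thesis using f[of "unit_vec d i" "unit_vec d j"] by simp
qed

lemma divmod_idx: assumes "b < (n::nat)" shows "(c*n+b) div n = c" "(c*n+b) mod n = b"
  using assms by (auto simp: add.commute[of "c*n"])

lemma idx_bound: assumes "c < (k::nat)" "b < n" shows "c*n+b < k*n"
proof -
  have "c*n + b < (c+1)*n" using assms(2) by simp
  also have "(c+1)*n \<le> k*n" using assms(1) by (intro mult_right_mono) auto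
  finally show ?thesis .
qed

lemma kron_carrier: "A \<in> carrier_mat k k \<Longrightarrow> kron A (1\<^sub>m n) \<in> carrier_mat (k*n) (k*n)"
  by (simp add: kron_def)

lemma kron_ent: assumes A: "A \<in> carrier_mat k k" and i: "i < k*n" and j: "j < k*n"
  shows "kron A (1\<^sub>m n) $$ (i,j) = A$$(i div n, j div n) * (if i mod n = j mod n then 1 else 0)"
proof -
  have n: "n > 0" using i by (cases n) auto
  show ?thesis using A i j n by (simp add: kron_def)
qed

lemma Kform: assumes A: "(A::complex mat) \<in> carrier_mat k k"
  and v: "v \<in> carrier_vec (k*n)" and w: "w \<in> carrier_vec (k*n)"
  shows "(kron A (1\<^sub>m n) *\<^sub>v v) \<bullet>c w = (\<Sum>c<k. \<Sum>b<n. \<Sum>a<k. A$$(c,a) * v$(a*n+b) * cnj (w$(c*n+b)))"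
proof -
  let ?K = "kron A (1\<^sub>m n)"
  have K: "?K \<in> carrier_mat (k*n) (k*n)" using A by (rule kron_carrier)
  have "(?K *\<^sub>v v) \<bullet>c w = (\<Sum>i<k*n. \<Sum>j<k*n. ?K$$(i,j) * v$j * cnj (w$i))" by (rule mvip[OF K v w])
  also have "\<dots> = (\<Sum>c<k. \<Sum>b<n. \<Sum>j<k*n. ?K$$(c*n+b,j) * v$j * cnj (w$(c*n+b)))" by (rule sum_split_idx)
  also have "\<dots> = (\<Sum>c<k. \<Sum>b<n. \<Sum>a<k. A$$(c,a) * v$(a*n+b) * cnj (w$(c*n+b)))"
  proof (rule sum.cong[OF refl], rule sum.cong[OF refl])
    fix c b assume c: "c \<in> {..<k}" and b: "b \<in> {..<n}"
    have "(\<Sum>j<k*n. ?K$$(c*n+b,j) * v$j * cnj (w$(c*n+b))) =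
       (\<Sum>a<k. \<Sum>b'<n. ?K$$(c*n+b,a*n+b') * v$(a*n+b') * cnj (w$(c*n+b)))" by (rule sum_split_idx)
    also have "\<dots> = (\<Sum>a<k. \<Sum>b'<n. if b' = b then A$$(c,a) * v$(a*n+b) * cnj (w$(c*n+b)) else 0)"
    proof (intro sum.cong refl)
      fix a b' assume a: "a \<in> {..<k}" and b': "b' \<in> {..<n}"
      have i1: "c*n+b < k*n" using c b by (intro idx_bound) auto
      have i2: "a*n+b' < k*n" using a b' by (intro idx_bound) auto
      show "?K$$(c*n+b,a*n+b') * v$(a*n+b') * cnj (w$(c*n+b)) =
          (if b' = b then A$$(c,a) * v$(a*n+b) * cnj (w$(c*n+b)) else 0)"
        using kron_ent[OF A i1 i2] divmod_idx[of b n c] divmod_idx[of b' n a] b b' by auto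
    qed
    also have "\<dots> = (\<Sum>a<k. A$$(c,a) * v$(a*n+b) * cnj (w$(c*n+b)))" using b by simp
    finally show "(\<Sum>j<k*n. ?K$$(c*n+b,j) * v$j * cnj (w$(c*n+b))) =
       (\<Sum>a<k. A$$(c,a) * v$(a*n+b) * cnj (w$(c*n+b)))" .
  qed
  finally show ?thesis .
qed

lemma Kpsd: assumes A: "psd k A" and v: "v \<in> carrier_vec (k*n)"
  shows "0 \<le> Re ((kron A (1\<^sub>m n) *\<^sub>v v) \<bullet>c v)"
proof -
  have Ac: "A \<in> carrier_mat k k" using A unfolding psd_def by auto
  define s where "s b = Matrix.vec k (\<lambda>a. v$(a*n+b))" for b
  have sc: "s b \<in> carrier_vec k" for b unfolding s_def by simp
  have "(kron A (1\<^sub>m n) *\<^sub>v v) \<bullet>c v = (\<Sum>c<k. \<Sum>b<n. \<Sum>a<k. A$$(c,a) * v$(a*n+b) * cnj (v$(c*n+b)))"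
    by (rule Kform[OF Ac v v])
  also have "\<dots> = (\<Sum>b<n. \<Sum>c<k. \<Sum>a<k. A$$(c,a) * v$(a*n+b) * cnj (v$(c*n+b)))" by (rule sum.swap)
  also have "\<dots> = (\<Sum>b<n. (A *\<^sub>v s b) \<bullet>c s b)"
  proof (intro sum.cong refl)
    fix b assume b: "b \<in> {..<n}"
    have "(A *\<^sub>v s b) \<bullet>c s b = (\<Sum>c<k. \<Sum>a<k. A$$(c,a) * s b $a * cnj (s b $ c))"
      by (rule mvip[OF Ac sc sc])
    also have "\<dots> = (\<Sum>c<k. \<Sum>a<k. A$$(c,a) * v$(a*n+b) * cnj (v$(c*n+b)))"
      unfolding s_def by (intro sum.cong refl) simp
    finally show "(\<Sum>c<k. \<Sum>a<k. A$$(c,a) * v$(a*n+b) * cnj (v$(c*n+b))) = (A *\<^sub>v s b) \<bullet>c s b" by simp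
  qed
  finally have "Re ((kron A (1\<^sub>m n) *\<^sub>v v) \<bullet>c v) = (\<Sum>b<n. Re ((A *\<^sub>v s b) \<bullet>c s b))"
    by (simp add: Re_sum)
  also have "\<dots> \<ge> 0" using A sc unfolding psd_def by (intro sum_nonneg) auto
  finally show ?thesis by simp
qed

lemma K_herm: assumes A: "hermitian A" "A \<in> carrier_mat k k" and i: "i < k*n" and j: "j < k*n"
  shows "cnj (kron A (1\<^sub>m n) $$ (i,j)) = kron A (1\<^sub>m n) $$ (j,i)"
proof -
  have "i div n < k" "j div n < k" using i j by (auto intro: less_mult_imp_div_less)
  then have "cnj (A$$(i div n, j div n)) = A$$(j div n, i div n)" using herm_ent[OF A] by blast
  then show ?thesis using kron_ent[OF A(2) i j] kron_ent[OF A(2) j i] by auto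
qed

lemma trace_eq: assumes A: "(A::complex mat) \<in> carrier_mat k k" and x: "x \<in> carrier_vec (k*n)"
  shows "mtrace (ptrace2 k n (outer x) * A) = (kron A (1\<^sub>m n) *\<^sub>v x) \<bullet>c x"
proof -
  define X where "X = ptrace2 k n (outer x)"
  have Xc: "X \<in> carrier_mat k k" unfolding X_def ptrace2_def by simp
  have Xe: "X$$(a,c) = (\<Sum>b<n. x$(a*n+b) * cnj (x$(c*n+b)))" if "a < k" "c < k" for a c
  proof -
    have "X$$(a,c) = (\<Sum>b<n. outer x $$ (a*n+b, c*n+b))" unfolding X_def ptrace2_def using that by simp
    also have "\<dots> = (\<Sum>b<n. x$(a*n+b) * cnj (x$(c*n+b)))"
      using x that idx_bound by (intro sum.cong refl) (simp add: outer_def)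
    finally show ?thesis .
  qed
  have "mtrace (X * A) = (\<Sum>a<k. (X*A)$$(a,a))" unfolding mtrace_def using Xc by simp
  also have "\<dots> = (\<Sum>a<k. \<Sum>c<k. X$$(a,c) * A$$(c,a))"
    using Xc A by (intro sum.cong refl) (simp add: scalar_prod_def lessThan_atLeast0)
  also have "\<dots> = (\<Sum>a<k. \<Sum>c<k. \<Sum>b<n. A$$(c,a) * x$(a*n+b) * cnj (x$(c*n+b)))"
    by (intro sum.cong refl) (simp add: Xe sum_distrib_left sum_distrib_right algebra_simps)
  also have "\<dots> = (\<Sum>c<k. \<Sum>a<k. \<Sum>b<n. A$$(c,a) * x$(a*n+b) * cnj (x$(c*n+b)))" by (rule sum.swap)
  also have "\<dots> = (\<Sum>c<k. \<Sum>b<n. \<Sum>a<k. A$$(c,a) * x$(a*n+b) * cnj (x$(c*n+b)))"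
    by (intro sum.cong refl sum.swap)
  also have "\<dots> = (kron A (1\<^sub>m n) *\<^sub>v x) \<bullet>c x" by (rule Kform[OF A x x, symmetric])
  finally show ?thesis unfolding X_def .
qed

lemma outer_form: assumes M: "(M::complex mat) \<in> carrier_mat d d"
  and x: "x \<in> carrier_vec d" and v: "v \<in> carrier_vec d"
  shows "((M - outer x) *\<^sub>v v) \<bullet>c v = (M *\<^sub>v v) \<bullet>c v - (v \<bullet>c x) * cnj (v \<bullet>c x)"
proof -
  have O: "outer x \<in> carrier_mat d d" using x by (simp add: outer_def)
  have MO: "M - outer x \<in> carrier_mat d d" using O by (rule minus_carrier_mat)
  have "((M - outer x) *\<^sub>v v) \<bullet>c v = (\<Sum>i<d. \<Sum>j<d. (M - outer x)$$(i,j) * v$j * cnj (v$i))"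
    by (rule mvip[OF MO v v])
  also have "\<dots> = (\<Sum>i<d. \<Sum>j<d. M$$(i,j) * v$j * cnj (v$i) - x$i * cnj (x$j) * v$j * cnj (v$i))"
    using M x by (intro sum.cong refl) (simp add: outer_def algebra_simps)
  also have "\<dots> = (\<Sum>i<d. \<Sum>j<d. M$$(i,j) * v$j * cnj (v$i)) - (\<Sum>i<d. \<Sum>j<d. x$i * cnj (x$j) * v$j * cnj (v$i))"
    by (simp add: sum_subtractf)
  also have "(\<Sum>i<d. \<Sum>j<d. x$i * cnj (x$j) * v$j * cnj (v$i)) = (\<Sum>i<d. x$i * cnj (v$i)) * (\<Sum>j<d. v$j * cnj (x$j))"
    unfolding sum_product by (intro sum.cong refl) (simp add: mult_ac)
  also have "(\<Sum>j<d. v$j * cnj (x$j)) = v \<bullet>c x" using cip[OF v x] by simp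
  also have "(\<Sum>i<d. x$i * cnj (v$i)) = cnj (v \<bullet>c x)" using cip[OF v x] by (simp add: cnj_sum mult.commute)
  finally show ?thesis using mvip[OF M v v] by (simp add: mult.commute)
qed

lemma loewner_conseq: assumes P: "orth_proj d P" and x: "x \<in> carrier_vec d"
  and le: "loewner_le d (outer x) P"
  shows "P *\<^sub>v x = x" "Re (x \<bullet>c x) \<le> 1"
proof -
  have Pc: "P \<in> carrier_mat d d" and PP: "P * P = P" and Ph: "hermitian P"
    using P unfolding orth_proj_def by auto
  have Pe: "\<And>i j. i < d \<Longrightarrow> j < d \<Longrightarrow> cnj (P$$(i,j)) = P$$(j,i)" using herm_ent[OF Ph Pc] by blast
  have ps: "\<And>v. v \<in> carrier_vec d \<Longrightarrow> 0 \<le> Re (((P - outer x) *\<^sub>v v) \<bullet>c v)"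
    using le unfolding loewner_le_def psd_def by auto
  have key: "0 \<le> Re ((P *\<^sub>v v) \<bullet>c v) - (cmod (v \<bullet>c x))^2" if v: "v \<in> carrier_vec d" for v
  proof -
    have "Re (((P - outer x) *\<^sub>v v) \<bullet>c v) = Re ((P *\<^sub>v v) \<bullet>c v) - (cmod (v \<bullet>c x))^2"
      unfolding outer_form[OF Pc x v] by (simp add: complex_mult_cnj cmod_power2)
    then show ?thesis using ps[OF v] by simp
  qed
  define y where "y = x - P *\<^sub>v x"
  have Pxc: "P *\<^sub>v x \<in> carrier_vec d" using Pc x by simp
  have yc: "y \<in> carrier_vec d" using Pxc x by (simp add: y_def)
  have PPx: "P *\<^sub>v (P *\<^sub>v x) = P *\<^sub>v x"
    using assoc_mult_mat_vec[OF Pc Pc x] PP by simp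
  have Py: "P *\<^sub>v y = 0\<^sub>v d"
  proof (rule eq_vecI)
    show "dim_vec (P *\<^sub>v y) = dim_vec (0\<^sub>v d)" using Pc by simp
    fix i assume i: "i < dim_vec (0\<^sub>v d)"
    have "P *\<^sub>v y = P *\<^sub>v x - P *\<^sub>v (P *\<^sub>v x)" unfolding y_def using Pc x Pxc
      by (simp add: mult_minus_distrib_mat_vec)
    then show "(P *\<^sub>v y) $ i = 0\<^sub>v d $ i" using i Pc unfolding PPx by simp
  qed
  have "(P *\<^sub>v y) \<bullet>c y = 0" unfolding Py using yc by simp
  then have "(cmod (y \<bullet>c x))^2 \<le> 0" using key[OF yc] by simp
  then have yx: "y \<bullet>c x = 0" by (smt (verit) zero_le_power2 power_eq_0_iff norm_eq_zero)
  have "(P *\<^sub>v y) \<bullet>c x = y \<bullet>c (P *\<^sub>v x)" by (rule form_herm[OF Pc Pe yc x])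
  then have yPx: "y \<bullet>c (P *\<^sub>v x) = 0" unfolding Py using x by simp
  have yi: "y$i = x$i - (P *\<^sub>v x)$i" if "i < d" for i
  proof -
    have "dim_vec (P *\<^sub>v x) = d" using Pc by simp
    then show ?thesis using that unfolding y_def by simp
  qed
  have "y \<bullet>c y = (\<Sum>i<d. y$i * cnj (y$i))" by (rule cip[OF yc yc])
  also have "\<dots> = (\<Sum>i<d. y$i * cnj (x$i) - y$i * cnj ((P *\<^sub>v x)$i))"
  proof (intro sum.cong refl)
    fix i assume "i \<in> {..<d}"
    then have "cnj (y$i) = cnj (x$i) - cnj ((P *\<^sub>v x)$i)" using yi by simp
    then show "y$i * cnj (y$i) = y$i * cnj (x$i) - y$i * cnj ((P *\<^sub>v x)$i)"
      by (simp add: right_diff_distrib)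
  qed
  also have "\<dots> = (\<Sum>i<d. y$i * cnj (x$i)) - (\<Sum>i<d. y$i * cnj ((P *\<^sub>v x)$i))"
    by (simp add: sum_subtractf)
  also have "\<dots> = y \<bullet>c x - y \<bullet>c (P *\<^sub>v x)" using cip[OF yc x] cip[OF yc Pxc] by simp
  finally have "y \<bullet>c y = 0" using yx yPx by simp
  then have "NF d (\<lambda>i. y$i) = 0" using NF_vec[OF yc] by simp
  then have y0: "y$i = 0" if "i < d" for i using NF_zero[of d "\<lambda>i. y$i"] that by simp
  show Px: "P *\<^sub>v x = x"
  proof (rule eq_vecI)
    show "dim_vec (P *\<^sub>v x) = dim_vec x" using Pc x by simp
    fix i assume "i < dim_vec x"
    then have "i < d" using x by simp
    then show "(P *\<^sub>v x) $ i = x $ i" using y0 yi by fastforce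
  qed
  define r where "r = NF d (\<lambda>i. x$i)"
  have xx: "x \<bullet>c x = complex_of_real r" unfolding r_def using NF_vec[OF x] by simp
  have r0: "r \<ge> 0" unfolding r_def by (rule NF_nonneg)
  have "0 \<le> r - r^2" using key[OF x] unfolding Px xx using r0 by simp
  show "Re (x \<bullet>c x) \<le> 1"
  proof (rule ccontr)
    assume "\<not> Re (x \<bullet>c x) \<le> 1"
    then have r1: "r > 1" unfolding xx by simp
    then have "r * 1 < r * r" by (intro mult_strict_left_mono) auto
    then show False using \<open>0 \<le> r - r^2\<close> by (simp add: power2_eq_square)
  qed
qed

lemma per_n:
  assumes n: "n > 0" and A: "A \<in> density k" and P: "orth_proj (k*n) P"
    and x: "x \<in> carrier_vec (k*n)" and le: "loewner_le (k*n) (outer x) P"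
    and k: "k > 0"
  shows "Re (mtrace (ptrace2 k n (outer x) * A)) \<le> lambda_max (P * kron A (1\<^sub>m n) * P)"
proof -
  have Apsd: "psd k A" using A unfolding density_def by auto
  then have Ac: "A \<in> carrier_mat k k" and Ah: "hermitian A" unfolding psd_def by auto
  define K where "K = kron A (1\<^sub>m n)"
  have Kc: "K \<in> carrier_mat (k*n) (k*n)" unfolding K_def by (rule kron_carrier[OF Ac])
  have Pc: "P \<in> carrier_mat (k*n) (k*n)" and Ph: "hermitian P" using P unfolding orth_proj_def by auto
  have Pe: "\<And>i j. i < k*n \<Longrightarrow> j < k*n \<Longrightarrow> cnj (P$$(i,j)) = P$$(j,i)" using herm_ent[OF Ph Pc] by blast
  have Ke: "\<And>i j. i < k*n \<Longrightarrow> j < k*n \<Longrightarrow> cnj (K$$(i,j)) = K$$(j,i)"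
    unfolding K_def using K_herm[OF Ah Ac] by blast
  define M where "M = P * K * P"
  have Mc: "M \<in> carrier_mat (k*n) (k*n)" unfolding M_def using Pc Kc by simp
  have Mv: "M *\<^sub>v v = P *\<^sub>v (K *\<^sub>v (P *\<^sub>v v))" if "v \<in> carrier_vec (k*n)" for v
  proof -
    have "M *\<^sub>v v = (P * K) *\<^sub>v (P *\<^sub>v v)" unfolding M_def
      using Pc Kc that by (intro assoc_mult_mat_vec) auto
    also have "\<dots> = P *\<^sub>v (K *\<^sub>v (P *\<^sub>v v))" using Pc Kc that by (intro assoc_mult_mat_vec) auto
    finally show ?thesis .
  qed
  have Mq: "(M *\<^sub>v v) \<bullet>c w = (K *\<^sub>v (P *\<^sub>v v)) \<bullet>c (P *\<^sub>v w)"
    if v: "v \<in> carrier_vec (k*n)" and w: "w \<in> carrier_vec (k*n)" for v w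
  proof -
    have a: "(K *\<^sub>v (P *\<^sub>v v)) \<in> carrier_vec (k*n)" using Kc Pc v by simp
    have "(P *\<^sub>v (K *\<^sub>v (P *\<^sub>v v))) \<bullet>c w = (K *\<^sub>v (P *\<^sub>v v)) \<bullet>c (P *\<^sub>v w)"
      by (rule form_herm[OF Pc Pe a w])
    then show ?thesis unfolding Mv[OF v] .
  qed
  have Mform: "(M *\<^sub>v v) \<bullet>c w = v \<bullet>c (M *\<^sub>v w)"
    if v: "v \<in> carrier_vec (k*n)" and w: "w \<in> carrier_vec (k*n)" for v w
  proof -
    have Pv: "P *\<^sub>v v \<in> carrier_vec (k*n)" and Pw: "P *\<^sub>v w \<in> carrier_vec (k*n)" using Pc v w by auto
    have KPw: "K *\<^sub>v (P *\<^sub>v w) \<in> carrier_vec (k*n)" using Kc Pw by simp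
    have "(M *\<^sub>v v) \<bullet>c w = (K *\<^sub>v (P *\<^sub>v v)) \<bullet>c (P *\<^sub>v w)" by (rule Mq[OF v w])
    also have "\<dots> = (P *\<^sub>v v) \<bullet>c (K *\<^sub>v (P *\<^sub>v w))" by (rule form_herm[OF Kc Ke Pv Pw])
    also have "\<dots> = v \<bullet>c (P *\<^sub>v (K *\<^sub>v (P *\<^sub>v w)))" by (rule form_herm[OF Pc Pe v KPw])
    also have "\<dots> = v \<bullet>c (M *\<^sub>v w)" unfolding Mv[OF w] ..
    finally show ?thesis .
  qed
  have Me: "\<And>i j. i < k*n \<Longrightarrow> j < k*n \<Longrightarrow> M$$(j,i) = cnj (M$$(i,j))"
    using ent_from_form[OF Mc Mform] by (metis)
  have d0: "k*n > 0" using k n by simp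
  obtain u \<mu> where u1: "NF (k*n) u = 1"
    and eig: "\<forall>i<k*n. (\<Sum>j<k*n. M$$(i,j) * u j) = complex_of_real \<mu> * u i"
    and bnd: "\<forall>y. QF (k*n) (\<lambda>i j. M$$(i,j)) y \<le> \<mu> * NF (k*n) y"
    and \<mu>def: "\<mu> = QF (k*n) (\<lambda>i j. M$$(i,j)) u"
    using rayleigh[OF d0, of "\<lambda>i j. M$$(i,j)"] Me by blast
  define uv where "uv = Matrix.vec (k*n) u"
  have uvc: "uv \<in> carrier_vec (k*n)" unfolding uv_def by simp
  have uvi: "\<And>i. i < k*n \<Longrightarrow> uv$i = u i" unfolding uv_def by simp
  have eigv: "M *\<^sub>v uv = complex_of_real \<mu> \<cdot>\<^sub>v uv"
  proof (rule eq_vecI)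
    show "dim_vec (M *\<^sub>v uv) = dim_vec (complex_of_real \<mu> \<cdot>\<^sub>v uv)" using Mc uvc by simp
    fix i assume "i < dim_vec (complex_of_real \<mu> \<cdot>\<^sub>v uv)"
    then have i: "i < k*n" using uvc by simp
    have "(M *\<^sub>v uv) $ i = (\<Sum>j<k*n. M$$(i,j) * uv$j)" by (rule mv_index[OF Mc uvc i])
    also have "\<dots> = (\<Sum>j<k*n. M$$(i,j) * u j)" using uvi by (intro sum.cong refl) auto
    also have "\<dots> = complex_of_real \<mu> * u i" using eig i by blast
    finally show "(M *\<^sub>v uv) $ i = (complex_of_real \<mu> \<cdot>\<^sub>v uv) $ i" using i uvc uvi by simp
  qed
  have uv0: "uv \<noteq> 0\<^sub>v (k*n)"
  proof
    assume "uv = 0\<^sub>v (k*n)"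
    then have "NF (k*n) u = NF (k*n) (\<lambda>_. 0)" using uvi by (intro NF_cong) (metis index_zero_vec(1))
    then show False using u1 by (simp add: NF_def)
  qed
  have ev: "eigenvalue M (complex_of_real \<mu>)"
    unfolding eigenvalue_def eigenvector_def using Mc uvc uv0 eigv by auto
  have fin: "finite {ev. eigenvalue M ev}"
    using card_finite_spectrum(1)[OF Mc] unfolding spectrum_def by simp
  have lam: "\<mu> \<le> lambda_max M" unfolding lambda_max_def
  proof (rule Max_ge)
    show "finite (Re ` {ev. eigenvalue M ev})" using fin by simp
    show "\<mu> \<in> Re ` {ev. eigenvalue M ev}" using ev by force
  qed
  have PKPpos: "0 \<le> Re ((M *\<^sub>v v) \<bullet>c v)" if v: "v \<in> carrier_vec (k*n)" for v
  proof -
    have "Pv": "P *\<^sub>v v \<in> carrier_vec (k*n)" using Pc v by simp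
    show ?thesis unfolding Mq[OF v v] K_def using Kpsd[OF Apsd Pv] by simp
  qed
  have \<mu>0: "0 \<le> \<mu>"
  proof -
    have "\<mu> = QF (k*n) (\<lambda>i j. M$$(i,j)) (\<lambda>i. uv$i)" unfolding \<mu>def using uvi by (intro QF_cong) auto
    also have "\<dots> = Re ((M *\<^sub>v uv) \<bullet>c uv)" by (rule QF_vec[OF Mc uvc])
    finally show ?thesis using PKPpos[OF uvc] by simp
  qed
  have Px: "P *\<^sub>v x = x" and nx: "Re (x \<bullet>c x) \<le> 1" using loewner_conseq[OF P x le] by auto
  have NFx: "NF (k*n) (\<lambda>i. x$i) = Re (x \<bullet>c x)" using NF_vec[OF x] by (metis Re_complex_of_real)
  have "Re (mtrace (ptrace2 k n (outer x) * A)) = Re ((K *\<^sub>v x) \<bullet>c x)"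
    unfolding K_def trace_eq[OF Ac x] ..
  also have "\<dots> = Re ((M *\<^sub>v x) \<bullet>c x)" unfolding Mq[OF x x] Px ..
  also have "\<dots> = QF (k*n) (\<lambda>i j. M$$(i,j)) (\<lambda>i. x$i)" by (rule QF_vec[OF Mc x, symmetric])
  also have "\<dots> \<le> \<mu> * NF (k*n) (\<lambda>i. x$i)" using bnd by blast
  also have "\<dots> \<le> \<mu> * 1" unfolding NFx using \<mu>0 nx by (intro mult_left_mono) auto
  also have "\<dots> \<le> lambda_max M" using lam by simp
  finally show ?thesis unfolding M_def K_def .
qed

theorem lemma3p5:
  fixes k :: nat and P :: "nat \<Rightarrow> complex mat" and f :: "complex mat \<Rightarrow> real"
    and x :: "nat \<Rightarrow> complex vec"
  assumes proj: "\<And>n. orth_proj (k * n) (P n)"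
    and C1: "cond_C1 k P f"
    and xdim: "\<And>n. x n \<in> carrier_vec (k * n)"
    and xle: "\<And>n. loewner_le (k * n) (outer (x n)) (P n)"
    and A: "A \<in> density k"
  shows "limsup (\<lambda>n. ereal (Re (mtrace (ptrace2 k n (outer (x n)) * A)))) \<le> ereal (f A)"
proof -
  have k: "k > 0"
  proof (rule ccontr)
    assume "\<not> k > 0"
    then have "k = 0" by simp
    moreover have "A \<in> carrier_mat k k" "mtrace A = 1" using A unfolding density_def psd_def by auto
    ultimately show False unfolding mtrace_def by simp
  qed
  have ev: "\<forall>\<^sub>F n in sequentially. ereal (Re (mtrace (ptrace2 k n (outer (x n)) * A)))
      \<le> ereal (lambda_max (P n * kron A (1\<^sub>m n) * P n))"
    using eventually_ge_at_top[of 1]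
  proof (rule eventually_mono)
    fix n :: nat assume "1 \<le> n"
    then have "n > 0" by simp
    then show "ereal (Re (mtrace (ptrace2 k n (outer (x n)) * A)))
      \<le> ereal (lambda_max (P n * kron A (1\<^sub>m n) * P n))"
      using per_n[OF _ A proj xdim xle k] by simp
  qed
  have lim: "(\<lambda>n. ereal (lambda_max (P n * kron A (1\<^sub>m n) * P n))) \<longlonglongrightarrow> ereal (f A)"
    using C1 A unfolding cond_C1_def by auto
  have "limsup (\<lambda>n. ereal (Re (mtrace (ptrace2 k n (outer (x n)) * A))))
      \<le> limsup (\<lambda>n. ereal (lambda_max (P n * kron A (1\<^sub>m n) * P n)))"
    by (rule Limsup_mono[OF ev])
  also have "\<dots> = ereal (f A)" by (rule lim_imp_Limsup[OF trivial_limit_sequentially lim])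
  finally show ?thesis .
qed

end
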